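(* An element $f\in C(X)_\mathcal{P}$ is almost clean (i.e. $f=r+e$ with $r$ a regular element, meaning a non-zero-divisor, and $e$ an idempotent of $C(X)_\mathcal{P}$) if and only if there exists a $\tau\mathcal{P}$-clopen subset $U$ of $X$ such that \[ int_{X_\mathcal{P}}(f^{-1}(\{1\}))\subseteq U\subseteq cl_{X_\mathcal{P}}(coz(f)). \]
   Context: Let $(X,\tau)$ be a $T_1$ topological space and $\mathcal{P}$ an ideal of closed subsets of $X$ (a nonempty family of closed sets closed under finite unions and under taking closed subsets). For $f\colon X\to\mathbb{R}$, $D_f$ denotes the set of points of discontinuity of $f$, and $C(X)_\mathcal{P}=\{f\colon X\to\mathbb{R} : \overline{D_f}\in\mathcal{P}\}$, a commutative ring with unity under pointwise operations. For $f\in C(X)_\mathcal{P}$, $Z_\mathcal{P}(f)=\{x: f(x)=0\}$ and $coz(f)=X\setminus Z_\mathcal{P}(f)$. $X_\mathcal{P}$ is $X$ with the topology having base $\{coz(f): f\in C(X)_\mathcal{P}\}$; $int_{X_\mathcal{P}}$ and $cl_{X_\mathcal{P}}$ are interior and closure in $X_\mathcal{P}$. A set $U\subseteq X$ is $\tau\mathcal{P}$-clopen if $U=Z_\mathcal{P}(f)=X\setminus Z_\mathcal{P}(g)$ for some $f,g\in C(X)_\mathcal{P}$. *)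

theory Defs
  imports "HOL-Analysis.Analysis"
begin

definition closed_ideal :: "'a::topological_space set set \<Rightarrow> bool" where
  "closed_ideal P \<longleftrightarrow> P \<noteq> {} \<and> (\<forall>A\<in>P. closed A) \<and>
     (\<forall>A B. A \<in> P \<longrightarrow> B \<in> P \<longrightarrow> A \<union> B \<in> P) \<and>
     (\<forall>A B. A \<in> P \<longrightarrow> closed B \<longrightarrow> B \<subseteq> A \<longrightarrow> B \<in> P)"

definition discont :: "('a::topological_space \<Rightarrow> real) \<Rightarrow> 'a set" where
  "discont f = {x. \<not> (f \<longlongrightarrow> f x) (at x)}"

definition CP :: "'a::topological_space set set \<Rightarrow> ('a \<Rightarrow> real) set" where
  "CP P = {f. closure (discont f) \<in> P}"

definition ZP :: "('a \<Rightarrow> real) \<Rightarrow> 'a set" where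
  "ZP f = {x. f x = 0}"

definition coz :: "('a \<Rightarrow> real) \<Rightarrow> 'a set" where
  "coz f = {x. f x \<noteq> 0}"

definition XP :: "'a::topological_space set set \<Rightarrow> 'a topology" where
  "XP P = topology_generated_by {coz f | f. f \<in> CP P}"

definition regular_elem :: "'a::topological_space set set \<Rightarrow> ('a \<Rightarrow> real) \<Rightarrow> bool" where
  "regular_elem P r \<longleftrightarrow> r \<in> CP P \<and>
     (\<forall>s\<in>CP P. (\<lambda>x. r x * s x) = (\<lambda>x. 0) \<longrightarrow> s = (\<lambda>x. 0))"

definition idempotent_elem :: "'a::topological_space set set \<Rightarrow> ('a \<Rightarrow> real) \<Rightarrow> bool" where
  "idempotent_elem P e \<longleftrightarrow> e \<in> CP P \<and> (\<lambda>x. e x * e x) = e"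

definition almost_clean :: "'a::topological_space set set \<Rightarrow> ('a \<Rightarrow> real) \<Rightarrow> bool" where
  "almost_clean P f \<longleftrightarrow>
     (\<exists>r e. regular_elem P r \<and> idempotent_elem P e \<and> f = (\<lambda>x. r x + e x))"

definition tauP_clopen :: "'a::topological_space set set \<Rightarrow> 'a set \<Rightarrow> bool" where
  "tauP_clopen P U \<longleftrightarrow> (\<exists>f\<in>CP P. \<exists>g\<in>CP P. U = ZP f \<and> U = - ZP g)"

end

theory Submission
  imports Defs
begin

lemma cont_of_notin: "x \<notin> discont f \<Longrightarrow> (f \<longlongrightarrow> f x) (at x)"
  by (simp add: discont_def)

lemma CP_comb:
  assumes P: "closed_ideal P" and f: "f \<in> CP P" and g: "g \<in> CP P"
    and sub: "discont h \<subseteq> discont f \<union> discont g"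
  shows "h \<in> CP P"
proof -
  have "closure (discont h) \<subseteq> closure (discont f \<union> discont g)"
    by (rule closure_mono[OF sub])
  also have "\<dots> = closure (discont f) \<union> closure (discont g)" by (rule closure_Un)
  finally have hs: "closure (discont h) \<subseteq> closure (discont f) \<union> closure (discont g)" .
  have un: "\<And>A B. A \<in> P \<Longrightarrow> B \<in> P \<Longrightarrow> A \<union> B \<in> P"
    and sb: "\<And>A B. A \<in> P \<Longrightarrow> closed B \<Longrightarrow> B \<subseteq> A \<Longrightarrow> B \<in> P"
    using P unfolding closed_ideal_def by blast+
  have "closure (discont f) \<in> P" "closure (discont g) \<in> P" using f g by (simp_all add: CP_def)
  hence "closure (discont f) \<union> closure (discont g) \<in> P" by (rule un)
  from sb[OF this closed_closure hs]
  show ?thesis by (simp add: CP_def)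
qed

lemma CP_const: fixes P :: "'a::topological_space set set" and c :: real
  assumes P: "closed_ideal P" shows "(\<lambda>x. c) \<in> CP P"
proof -
  have "discont (\<lambda>x::'a. c) = {}" by (auto simp: discont_def)
  moreover obtain A where A: "A \<in> P" using P by (auto simp: closed_ideal_def)
  moreover have sb: "\<And>A B. A \<in> P \<Longrightarrow> closed B \<Longrightarrow> B \<subseteq> A \<Longrightarrow> B \<in> P"
    using P unfolding closed_ideal_def by blast
  have "{} \<in> P" by (rule sb[OF A]) auto
  ultimately show ?thesis by (simp add: CP_def)
qed

lemma CP_add: "closed_ideal P \<Longrightarrow> f \<in> CP P \<Longrightarrow> g \<in> CP P \<Longrightarrow> (\<lambda>x. f x + g x) \<in> CP P"
  by (rule CP_comb[of P f g]) (auto simp: discont_def intro: tendsto_add)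

lemma CP_diff: "closed_ideal P \<Longrightarrow> f \<in> CP P \<Longrightarrow> g \<in> CP P \<Longrightarrow> (\<lambda>x. f x - g x) \<in> CP P"
  by (rule CP_comb[of P f g]) (auto simp: discont_def intro: tendsto_diff)

lemma CP_mult: "closed_ideal P \<Longrightarrow> f \<in> CP P \<Longrightarrow> g \<in> CP P \<Longrightarrow> (\<lambda>x. f x * g x) \<in> CP P"
  by (rule CP_comb[of P f g]) (auto simp: discont_def intro: tendsto_mult)

definition ind :: "'a set \<Rightarrow> 'a \<Rightarrow> real" where
  "ind A = (\<lambda>x. if x \<in> A then 1 else 0)"

lemma ind_CP:
  assumes P: "closed_ideal P" and U: "tauP_clopen P U"
  shows "ind U \<in> CP P"
proof -
  obtain f g where f: "f \<in> CP P" and g: "g \<in> CP P" and U1: "U = ZP f" and U2: "U = - ZP g"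
    using U by (auto simp: tauP_clopen_def)
  have "discont (ind U) \<subseteq> discont f \<union> discont g"
  proof
    fix x assume x: "x \<in> discont (ind U)"
    show "x \<in> discont f \<union> discont g"
    proof (rule ccontr)
      assume "x \<notin> discont f \<union> discont g"
      hence cf: "(f \<longlongrightarrow> f x) (at x)" and cg: "(g \<longlongrightarrow> g x) (at x)"
        by (auto simp: discont_def)
      have "(ind U \<longlongrightarrow> ind U x) (at x)"
      proof (cases "x \<in> U")
        case True
        hence "g x \<noteq> 0" using U2 by (auto simp: ZP_def)
        hence "eventually (\<lambda>y. g y \<noteq> 0) (at x)" using cg tendsto_imp_eventually_ne by blast
        hence "eventually (\<lambda>y. ind U y = ind U x) (at x)"
          by (rule eventually_mono) (use True U2 in \<open>auto simp: ind_def ZP_def\<close>)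
        thus ?thesis by (rule tendsto_eventually)
      next
        case False
        hence "f x \<noteq> 0" using U1 by (auto simp: ZP_def)
        hence "eventually (\<lambda>y. f y \<noteq> 0) (at x)" using cf tendsto_imp_eventually_ne by blast
        hence "eventually (\<lambda>y. ind U y = ind U x) (at x)"
          by (rule eventually_mono) (use False U1 in \<open>auto simp: ind_def ZP_def\<close>)
        thus ?thesis by (rule tendsto_eventually)
      qed
      thus False using x by (auto simp: discont_def)
    qed
  qed
  thus ?thesis using CP_comb[OF P f g] by blast
qed

lemma clopen_compl: "tauP_clopen P U \<Longrightarrow> tauP_clopen P (- U)"
proof -
  assume "tauP_clopen P U"
  then obtain f g where fg: "f \<in> CP P" "g \<in> CP P" and e1: "U = ZP f" and e2: "U = - ZP g"
    unfolding tauP_clopen_def by blast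
  have "- U = ZP g" using e2 by simp
  moreover have "- U = - ZP f" using e1 by simp
  ultimately show ?thesis unfolding tauP_clopen_def using fg by blast
qed

lemma idem_ind:
  assumes P: "closed_ideal P" and e: "idempotent_elem P e"
  shows "e = ind (coz e) \<and> tauP_clopen P (coz e)"
proof -
  have eC: "e \<in> CP P" and ee: "\<And>x. e x * e x = e x" using e
    by (auto simp: idempotent_elem_def fun_eq_iff)
  have v: "e x = 0 \<or> e x = 1" for x using ee[of x]
    by (cases "e x = 0") auto
  have "e = ind (coz e)" using v by (auto simp: ind_def coz_def fun_eq_iff)
  moreover have "(\<lambda>x. 1 - e x) \<in> CP P" using CP_diff[OF P CP_const[OF P] eC] .
  moreover have "coz e = ZP (\<lambda>x. 1 - e x)" "coz e = - ZP e"
    using v by (auto simp: coz_def ZP_def)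
  ultimately show ?thesis using eC unfolding tauP_clopen_def by blast
qed

lemma coz_open: "f \<in> CP P \<Longrightarrow> openin (XP P) (coz f)"
  unfolding XP_def openin_topology_generated_by_iff
  by (rule generate_topology_on.Basis) blast

lemma clopen_open: "tauP_clopen P U \<Longrightarrow> openin (XP P) U"
  unfolding tauP_clopen_def
proof -
  assume "\<exists>f\<in>CP P. \<exists>g\<in>CP P. U = ZP f \<and> U = - ZP g"
  then obtain g where "g \<in> CP P" "U = coz g" by (auto simp: ZP_def coz_def)
  thus ?thesis using coz_open by blast
qed

lemma topspace_XP: fixes P :: "'a::topological_space set set"
  shows "closed_ideal P \<Longrightarrow> topspace (XP P) = UNIV"
proof -
  assume P: "closed_ideal P"
  have "coz (\<lambda>x::'a. 1::real) = UNIV" by (auto simp: coz_def)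
  moreover have "coz (\<lambda>x::'a. 1::real) \<in> {coz f | f. f \<in> CP P}" using CP_const[OF P, of 1] by blast
  ultimately have "UNIV \<subseteq> \<Union>{coz f | f. f \<in> CP P}"
  proof -
    assume a: "coz (\<lambda>x::'a. 1::real) = UNIV" and b: "coz (\<lambda>x::'a. 1::real) \<in> {coz f | f. f \<in> CP P}"
    show ?thesis
    proof
      fix x :: 'a
      have "x \<in> coz (\<lambda>x::'a. 1::real)" using a by simp
      with b show "x \<in> \<Union>{coz f | f. f \<in> CP P}" by (rule UnionI)
    qed
  qed
  thus ?thesis unfolding XP_def topology_generated_by_topspace
    by (rule subset_antisym[OF subset_UNIV])
qed

lemma open_basis:
  assumes P: "closed_ideal P" and V: "openin (XP P) V" and x: "x \<in> V"
  shows "\<exists>s\<in>CP P. x \<in> coz s \<and> coz s \<subseteq> V"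
proof -
  have "generate_topology_on {coz f | f. f \<in> CP P} V"
    using V by (simp add: XP_def openin_topology_generated_by_iff)
  thus ?thesis using x
  proof (induction arbitrary: x rule: generate_topology_on.induct)
    case Empty thus ?case by simp
  next
    case (Int a b)
    then obtain s1 s2 where "s1 \<in> CP P" "x \<in> coz s1" "coz s1 \<subseteq> a"
      "s2 \<in> CP P" "x \<in> coz s2" "coz s2 \<subseteq> b" by (meson IntE)
    moreover have "coz (\<lambda>y. s1 y * s2 y) = coz s1 \<inter> coz s2" by (auto simp: coz_def)
    ultimately show ?case using CP_mult[OF P, of s1 s2]
      by (intro bexI[of _ "\<lambda>y. s1 y * s2 y"]) auto
  next
    case (UN K)
    then obtain k where "k \<in> K" "x \<in> k" by blast
    thus ?case using UN.IH by blast
  next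
    case (Basis s)
    then obtain g where "g \<in> CP P" "s = coz g" by blast
    thus ?case using Basis.prems by blast
  qed
qed

theorem theorem3p11:
  fixes P :: "'a::t1_space set set" and f :: "'a \<Rightarrow> real"
  assumes "closed_ideal P" and "f \<in> CP P"
  shows "almost_clean P f \<longleftrightarrow>
    (\<exists>U. tauP_clopen P U \<and>
         (XP P) interior_of (f -` {1}) \<subseteq> U \<and> U \<subseteq> (XP P) closure_of (coz f))"
proof
  note P = assms(1) and fC = assms(2)
  assume "almost_clean P f"
  then obtain r e where r: "regular_elem P r" and e: "idempotent_elem P e"
    and fre: "f = (\<lambda>x. r x + e x)" by (auto simp: almost_clean_def)
  define A where "A = coz e"
  have eA: "e = ind A" and Acl: "tauP_clopen P A" using idem_ind[OF P e] by (auto simp: A_def)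
  have rC: "r \<in> CP P" and rreg: "\<And>s. s \<in> CP P \<Longrightarrow> (\<lambda>x. r x * s x) = (\<lambda>x. 0) \<Longrightarrow> s = (\<lambda>x. 0)"
    using r by (auto simp: regular_elem_def)
  have Aop: "openin (XP P) A" and cAop: "openin (XP P) (-A)"
    using clopen_open Acl clopen_compl by blast+
  have "(XP P) interior_of (f -` {1}) \<subseteq> -A"
  proof
    fix x assume xi: "x \<in> (XP P) interior_of (f -` {1})"
    show "x \<in> -A"
    proof
      assume xA: "x \<in> A"
      have "openin (XP P) ((XP P) interior_of (f -` {1}) \<inter> A)"
        using Aop by (simp add: openin_Int)
      then obtain s where sC: "s \<in> CP P" and xs: "x \<in> coz s"
        and ss: "coz s \<subseteq> (XP P) interior_of (f -` {1}) \<inter> A"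
        using open_basis[OF P] xi xA by blast
      have "(\<lambda>y. r y * s y) = (\<lambda>y. 0)"
      proof
        fix y show "r y * s y = 0"
        proof (cases "s y = 0")
          case False
          hence "y \<in> (XP P) interior_of (f -` {1}) \<and> y \<in> A" using ss by (auto simp: coz_def)
          hence "f y = 1" "e y = 1" using interior_of_subset eA by (fastforce simp: ind_def)+
          thus ?thesis using fre by (simp add: fun_eq_iff)
        qed simp
      qed
      hence "s = (\<lambda>y. 0)" using rreg sC by blast
      thus False using xs by (simp add: coz_def)
    qed
  qed
  moreover have "-A \<subseteq> (XP P) closure_of (coz f)"
  proof
    fix x assume xA: "x \<in> -A"
    show "x \<in> (XP P) closure_of (coz f)"
      unfolding in_closure_of topspace_XP[OF P]
    proof (intro conjI allI impI UNIV_I)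
      fix T assume T: "x \<in> T \<and> openin (XP P) T"
      show "\<exists>y. y \<in> coz f \<and> y \<in> T"
      proof (rule ccontr)
        assume no: "\<not> (\<exists>y. y \<in> coz f \<and> y \<in> T)"
        have "openin (XP P) (T \<inter> -A)" using T cAop by (simp add: openin_Int)
        then obtain s where sC: "s \<in> CP P" and xs: "x \<in> coz s"
          and ss: "coz s \<subseteq> T \<inter> -A"
          using open_basis[OF P] T xA by blast
        have "(\<lambda>y. r y * s y) = (\<lambda>y. 0)"
        proof
          fix y show "r y * s y = 0"
          proof (cases "s y = 0")
            case False
            hence "y \<in> T" "y \<notin> A" using ss by (auto simp: coz_def)
            hence "f y = 0" "e y = 0" using no eA by (auto simp: ind_def coz_def)
            thus ?thesis using fre by (simp add: fun_eq_iff)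
          qed simp
        qed
        hence "s = (\<lambda>y. 0)" using rreg sC by blast
        thus False using xs by (simp add: coz_def)
      qed
    qed
  qed
  ultimately show "\<exists>U. tauP_clopen P U \<and>
         (XP P) interior_of (f -` {1}) \<subseteq> U \<and> U \<subseteq> (XP P) closure_of (coz f)"
    using clopen_compl[OF Acl] by blast
next
  note P = assms(1) and fC = assms(2)
  assume "\<exists>U. tauP_clopen P U \<and>
         (XP P) interior_of (f -` {1}) \<subseteq> U \<and> U \<subseteq> (XP P) closure_of (coz f)"
  then obtain U where Ucl: "tauP_clopen P U" and U1: "(XP P) interior_of (f -` {1}) \<subseteq> U"
    and U2: "U \<subseteq> (XP P) closure_of (coz f)" by blast
  define e where "e = ind (-U)"
  define r where "r = (\<lambda>x. f x - e x)"
  have eC: "e \<in> CP P" using ind_CP[OF P clopen_compl[OF Ucl]] by (simp add: e_def)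
  have ide: "idempotent_elem P e" using eC by (auto simp: idempotent_elem_def e_def ind_def fun_eq_iff)
  have rC: "r \<in> CP P" unfolding r_def by (rule CP_diff[OF P fC eC])
  have Uop: "openin (XP P) U" and cUop: "openin (XP P) (-U)"
    using clopen_open Ucl clopen_compl by blast+
  have "regular_elem P r"
    unfolding regular_elem_def
  proof (intro conjI rC ballI impI)
    fix s assume sC: "s \<in> CP P" and rs: "(\<lambda>x. r x * s x) = (\<lambda>x. 0)"
    have z: "s y \<noteq> 0 \<Longrightarrow> r y = 0" for y using rs by (metis mult_eq_0_iff)
    show "s = (\<lambda>x. 0)"
    proof (rule ccontr)
      assume "s \<noteq> (\<lambda>x. 0)"
      then obtain x where sx: "s x \<noteq> 0" by auto
      have cs: "openin (XP P) (coz s)" using coz_open[OF sC] .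
      show False
      proof (cases "x \<in> U")
        case True
        have "x \<in> (XP P) closure_of (coz f)" using U2 True by blast
        moreover have "openin (XP P) (coz s \<inter> U)" using cs Uop by (simp add: openin_Int)
        moreover have "x \<in> coz s \<inter> U" using True sx by (simp add: coz_def)
        ultimately obtain y where "y \<in> coz f" "y \<in> coz s \<inter> U"
          unfolding in_closure_of by blast
        thus False using z[of y] by (auto simp: coz_def r_def e_def ind_def)
      next
        case False
        have op: "openin (XP P) (coz s \<inter> -U)" using cs cUop by (simp add: openin_Int)
        have "coz s \<inter> -U \<subseteq> f -` {1}"
          using z by (auto simp: coz_def r_def e_def ind_def)
        hence "coz s \<inter> -U \<subseteq> (XP P) interior_of (f -` {1})"
          using interior_of_maximal op by blast
        thus False using U1 False sx by (auto simp: coz_def)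
      qed
    qed
  qed
  moreover have "f = (\<lambda>x. r x + e x)" by (simp add: r_def)
  ultimately show "almost_clean P f" using ide by (auto simp: almost_clean_def)
qed

end
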